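(* Let $T$ be a session type with $\Delta\vdash T:\mathsf{s}^m$ satisfying the standing assumptions below. If $\llbracket T\rrbracket\xrightarrow{\alpha}p$ in the BPA labelled transition system over $\mathcal{E}_T$, then $p=\llbracket T'\rrbracket$ for some session type $T'$ with $T\xrightarrow{\alpha}T'$ in the session-type labelled transition system.
   Context: Session types: $T ::= \mathsf{Skip} \mid {!}B \mid {?}B \mid \oplus\{\ell:T_\ell\}_{\ell\in L} \mid \&\{\ell:T_\ell\}_{\ell\in L} \mid T;T \mid \mu a{:}\kappa.T \mid a$, with kinding: $\mathsf{Skip}:\mathsf{s}^{\mathsf{un}}$; ${!}B,{?}B:\mathsf{s}^{\mathsf{lin}}$ for message types $B$; choices $:\mathsf{s}^{\mathsf{lin}}$ when all branches are; $T;U:\mathsf{s}^{\mathsf{lin}}$ when both are; $\mu a{:}\kappa.T:\kappa$ when $T$ contractive on $a$ and $\Delta,a{:}\kappa\vdash T:\kappa$; variables by lookup in $\Delta$; subsumption. Terminated: $\mathsf{Skip}$; $T;U$ iff both terminated; $\mu a.T$ iff $T$ terminated. Contractive on $a$: $T\neq a$, for $T=U;V$, $U$ contractive on $a$ and if $U$ terminated then $V$ contractive on $a$; for $T=\mu b.T'$, $T'$ contractive on $a$. Standing assumptions: every $\mu$-bound variable occurs free in its body; bound variables are distinct. Session-type LTS: ${!}B\xrightarrow{!B}\mathsf{Skip}$, ${?}B\xrightarrow{?B}\mathsf{Skip}$, $\star\{\ell:T_\ell\}_{\ell\in L}\xrightarrow{\star k}T_k$ ($k\in L$), $b\xrightarrow{b}\mathsf{Skip}$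 for a free variable $b$; $\mu a.T\xrightarrow{\alpha}T'$ if $T[\mu a.T/a]\xrightarrow{\alpha}T'$; $T;U\xrightarrow{\alpha}T';U$ if $T\xrightarrow{\alpha}T'$; $T;U\xrightarrow{\alpha}U'$ if $T$ is terminated and $U\xrightarrow{\alpha}U'$. BPA processes $p ::= \alpha \mid X \mid p+p \mid p\cdot p \mid \varepsilon$ with LTS over equations $\mathcal E$: $\alpha\xrightarrow{\alpha}\varepsilon$; $p+q\xrightarrow{\alpha}p'$ if $p\xrightarrow{\alpha}p'$ (and symmetrically for $q$); $p\cdot q\xrightarrow{\alpha}p'\cdot q$ if $p\xrightarrow{\alpha}p'\neq\varepsilon$; $p\cdot q\xrightarrow{\alpha}q$ if $p\xrightarrow{\alpha}\varepsilon$; $X\xrightarrow{\alpha}p'$ if $X\triangleq p\in\mathcal E$ and $p\xrightarrow{\alpha}p'$. Operator $\odot$: $p\odot\varepsilon=p$, $\varepsilon\odot q=q$, else $p\cdot q$. Translation (each $\mu$-subterm $\mu a_i.T_i$ of $T$ gets a distinct variable $X_i$): $\llbracket\mathsf{Skip}\rrbracket=\varepsilon$, $\llbracket\sharp B\rrbracket=\sharp B$, $\llbracket\star\{\ell:T_\ell\}\rrbracket=\sum_\ell\star\ell\odot\llbracket T_\ell\rrbracket$, $\llbracket T;U\rrbracket=\llbracket T\rrbracket\odot\llbracket U\rrbracket$, $\llbracket b\rrbracket=b$ for free $b$, $\llbracket a_i\rrbracket=\llbracket\mu a_i.T_i\rrbracket=X_i$. Unravel: $\mathrm{unr}_\sigma(T;U)=\mathrm{unr}_\sigma(U)$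 if $\mathrm{unr}_\sigma(T)=\mathsf{Skip}$, else $\mathrm{unr}_\sigma(T);U$; $\mathrm{unr}_\sigma(\mu a.T)=\mathrm{unr}_{\sigma\circ[\mu a.T/a]}(T)$; $\mathrm{unr}_\sigma(T)=T$ otherwise. Equations: $\mathcal{E}_T=\{X_i\triangleq\llbracket\mathrm{unr}_{\mathrm{id}}(T_i)\rrbracket\}_i$. *)

theory Defs
  imports Main
begin

text \<open>Polarity: Out stands for ! (messages) and the internal choice (oplus);
  In stands for ? (messages) and the external choice (&).\<close>
datatype pol = Out | In

datatype mult = MUn | MLin

datatype ('b, 'l, 'v) stype =
    Skip
  | Msg pol 'b
  | Choice pol "('l \<times> ('b, 'l, 'v) stype) list"
  | SSeq "('b, 'l, 'v) stype" "('b, 'l, 'v) stype"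
  | Mu 'v mult "('b, 'l, 'v) stype"
  | TVar 'v

definition mult_le :: "mult \<Rightarrow> mult \<Rightarrow> bool" where
  "mult_le m m' \<longleftrightarrow> m = m' \<or> (m = MUn \<and> m' = MLin)"

fun terminated :: "('b, 'l, 'v) stype \<Rightarrow> bool" where
  "terminated Skip = True"
| "terminated (SSeq T U) = (terminated T \<and> terminated U)"
| "terminated (Mu a k T) = terminated T"
| "terminated _ = False"

fun contractive :: "'v \<Rightarrow> ('b, 'l, 'v) stype \<Rightarrow> bool" where
  "contractive a (TVar b) = (b \<noteq> a)"
| "contractive a (SSeq U V) = (contractive a U \<and> (terminated U \<longrightarrow> contractive a V))"
| "contractive a (Mu b k T) = contractive a T"
| "contractive a _ = True"

inductive kinding :: "('v \<Rightarrow> mult option) \<Rightarrow> ('b, 'l, 'v) stype \<Rightarrow> mult \<Rightarrow> bool" where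
  k_skip: "kinding \<Delta> Skip MUn"
| k_msg: "kinding \<Delta> (Msg p B) MLin"
| k_choice: "(\<forall>lU \<in> set bs. kinding \<Delta> (snd lU) MLin) \<Longrightarrow> kinding \<Delta> (Choice p bs) MLin"
| k_seq: "kinding \<Delta> T MLin \<Longrightarrow> kinding \<Delta> U MLin \<Longrightarrow> kinding \<Delta> (SSeq T U) MLin"
| k_mu: "contractive a T \<Longrightarrow> kinding (\<Delta>(a \<mapsto> k)) T k \<Longrightarrow> kinding \<Delta> (Mu a k T) k"
| k_var: "\<Delta> a = Some k \<Longrightarrow> kinding \<Delta> (TVar a) k"
| k_sub: "kinding \<Delta> T k \<Longrightarrow> mult_le k k' \<Longrightarrow> kinding \<Delta> T k'"

fun fvs :: "('b, 'l, 'v) stype \<Rightarrow> 'v set" where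
  "fvs (TVar a) = {a}"
| "fvs (SSeq T U) = fvs T \<union> fvs U"
| "fvs (Mu a k T) = fvs T - {a}"
| "fvs (Choice p bs) = (\<Union>lU \<in> set bs. fvs (snd lU))"
| "fvs _ = {}"

fun bvs :: "('b, 'l, 'v) stype \<Rightarrow> 'v list" where
  "bvs (SSeq T U) = bvs T @ bvs U"
| "bvs (Mu a k T) = a # bvs T"
| "bvs (Choice p bs) = concat (map (\<lambda>lU. bvs (snd lU)) bs)"
| "bvs _ = []"

text \<open>Standing assumption: every mu-bound variable occurs free in its body.\<close>
fun mu_occurs :: "('b, 'l, 'v) stype \<Rightarrow> bool" where
  "mu_occurs (SSeq T U) = (mu_occurs T \<and> mu_occurs U)"
| "mu_occurs (Mu a k T) = (a \<in> fvs T \<and> mu_occurs T)"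
| "mu_occurs (Choice p bs) = (\<forall>lU \<in> set bs. mu_occurs (snd lU))"
| "mu_occurs _ = True"

text \<open>Standing assumption (Barendregt convention): bound variables are pairwise
  distinct and distinct from the free variables.\<close>
definition bv_distinct :: "('b, 'l, 'v) stype \<Rightarrow> bool" where
  "bv_distinct T \<longleftrightarrow> distinct (bvs T) \<and> set (bvs T) \<inter> fvs T = {}"

text \<open>Simultaneous substitution (naive; capture is excluded by the standing
  assumptions).\<close>
fun ssubst :: "('v \<Rightarrow> ('b, 'l, 'v) stype) \<Rightarrow> ('b, 'l, 'v) stype \<Rightarrow> ('b, 'l, 'v) stype" where
  "ssubst \<sigma> (TVar a) = \<sigma> a"
| "ssubst \<sigma> (SSeq T U) = SSeq (ssubst \<sigma> T) (ssubst \<sigma> U)"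
| "ssubst \<sigma> (Mu a k T) = Mu a k (ssubst (\<sigma>(a := TVar a)) T)"
| "ssubst \<sigma> (Choice p bs) = Choice p (map (\<lambda>(l, U). (l, ssubst \<sigma> U)) bs)"
| "ssubst \<sigma> Skip = Skip"
| "ssubst \<sigma> (Msg p B) = Msg p B"

text \<open>T[S/a]\<close>
definition subst1 :: "('b, 'l, 'v) stype \<Rightarrow> 'v \<Rightarrow> ('b, 'l, 'v) stype \<Rightarrow> ('b, 'l, 'v) stype" where
  "subst1 S a T = ssubst (TVar(a := S)) T"

datatype ('b, 'l, 'v) act = AMsg pol 'b | AChoice pol 'l | AVar 'v

inductive st_step :: "('b, 'l, 'v) stype \<Rightarrow> ('b, 'l, 'v) act \<Rightarrow> ('b, 'l, 'v) stype \<Rightarrow> bool" where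
  st_msg: "st_step (Msg p B) (AMsg p B) Skip"
| st_choice: "(k, Tk) \<in> set bs \<Longrightarrow> st_step (Choice p bs) (AChoice p k) Tk"
| st_var: "st_step (TVar b) (AVar b) Skip"
| st_mu: "st_step (subst1 (Mu a k T) a T) \<alpha> T' \<Longrightarrow> st_step (Mu a k T) \<alpha> T'"
| st_seq1: "st_step T \<alpha> T' \<Longrightarrow> st_step (SSeq T U) \<alpha> (SSeq T' U)"
| st_seq2: "terminated T \<Longrightarrow> st_step U \<alpha> U' \<Longrightarrow> st_step (SSeq T U) \<alpha> U'"

text \<open>Process variables X_i are named by the bound variable a_i of the corresponding
  mu-subterm (bound variables are distinct).  Sums are n-ary: p + q is PSum [p, q].\<close>
datatype ('b, 'l, 'v) bpa =
    PAct "('b, 'l, 'v) act"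
  | PVar 'v
  | PSum "('b, 'l, 'v) bpa list"
  | PSeq "('b, 'l, 'v) bpa" "('b, 'l, 'v) bpa"
  | Eps

inductive bpa_step :: "('v \<times> ('b, 'l, 'v) bpa) set \<Rightarrow> ('b, 'l, 'v) bpa \<Rightarrow> ('b, 'l, 'v) act \<Rightarrow> ('b, 'l, 'v) bpa \<Rightarrow> bool"
  for E where
  b_act: "bpa_step E (PAct \<alpha>) \<alpha> Eps"
| b_sum: "p \<in> set ps \<Longrightarrow> bpa_step E p \<alpha> p' \<Longrightarrow> bpa_step E (PSum ps) \<alpha> p'"
| b_seq1: "bpa_step E p \<alpha> p' \<Longrightarrow> p' \<noteq> Eps \<Longrightarrow> bpa_step E (PSeq p q) \<alpha> (PSeq p' q)"
| b_seq2: "bpa_step E p \<alpha> Eps \<Longrightarrow> bpa_step E (PSeq p q) \<alpha> q"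
| b_var: "(X, p) \<in> E \<Longrightarrow> bpa_step E p \<alpha> p' \<Longrightarrow> bpa_step E (PVar X) \<alpha> p'"

definition odot :: "('b, 'l, 'v) bpa \<Rightarrow> ('b, 'l, 'v) bpa \<Rightarrow> ('b, 'l, 'v) bpa" where
  "odot p q = (if q = Eps then p else if p = Eps then q else PSeq p q)"

text \<open>Translation, relative to the set S of mu-bound variables of the original type T
  (variables in S are the a_i, translated to X_i; others are free).\<close>
fun tr :: "'v set \<Rightarrow> ('b, 'l, 'v) stype \<Rightarrow> ('b, 'l, 'v) bpa" where
  "tr S Skip = Eps"
| "tr S (Msg p B) = PAct (AMsg p B)"
| "tr S (Choice p bs) = PSum (map (\<lambda>(l, U). odot (PAct (AChoice p l)) (tr S U)) bs)"
| "tr S (SSeq T U) = odot (tr S T) (tr S U)"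
| "tr S (TVar b) = (if b \<in> S then PVar b else PAct (AVar b))"
| "tr S (Mu a k T) = PVar a"

fun unr :: "('v \<Rightarrow> ('b, 'l, 'v) stype) \<Rightarrow> ('b, 'l, 'v) stype \<Rightarrow> ('b, 'l, 'v) stype" where
  "unr \<sigma> (SSeq T U) = (if unr \<sigma> T = Skip then unr \<sigma> U else SSeq (unr \<sigma> T) U)"
| "unr \<sigma> (Mu a k T) = unr (\<lambda>x. ssubst \<sigma> ((TVar(a := Mu a k T)) x)) T"
| "unr \<sigma> T = T"

fun mu_subterms :: "('b, 'l, 'v) stype \<Rightarrow> ('v \<times> mult \<times> ('b, 'l, 'v) stype) set" where
  "mu_subterms (SSeq T U) = mu_subterms T \<union> mu_subterms U"
| "mu_subterms (Mu a k T) = insert (a, k, T) (mu_subterms T)"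
| "mu_subterms (Choice p bs) = (\<Union>lU \<in> set bs. mu_subterms (snd lU))"
| "mu_subterms _ = {}"

definition eqs :: "('b, 'l, 'v) stype \<Rightarrow> ('v \<times> ('b, 'l, 'v) bpa) set" where
  "eqs T = {(a, tr (set (bvs T)) (unr TVar U)) | a k U. (a, k, U) \<in> mu_subterms T}"

end

theory Submission
  imports Defs
begin
lemma stype_induct'[case_names Skip Msg Choice SSeq Mu TVar]:
  assumes "P Skip" "\<And>p B. P (Msg p B)" "\<And>p bs. (\<And>l U. (l,U) \<in> set bs \<Longrightarrow> P U) \<Longrightarrow> P (Choice p bs)"
    "\<And>T U. P T \<Longrightarrow> P U \<Longrightarrow> P (SSeq T U)" "\<And>a k T. P T \<Longrightarrow> P (Mu a k T)" "\<And>a. P (TVar a)"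
  shows "P T"
proof (induction T)
  case (Choice p bs)
  show ?case
  proof (rule assms(3))
    fix l U assume "(l, U) \<in> set bs"
    then show "P U" using Choice.IH[of "(l,U)" U] by simp
  qed
qed (use assms in auto)

lemma fvs_choice: "(l, U) \<in> set bs \<Longrightarrow> fvs U \<subseteq> fvs (Choice p bs)"
  by (auto intro!: bexI[where x="(l,U)"])
lemma bvs_choice: "(l, U) \<in> set bs \<Longrightarrow> set (bvs U) \<subseteq> set (bvs (Choice p bs))"
  by (auto intro!: bexI[where x="(l,U)"])

lemma ssubst_cong: "(\<And>x. x \<in> fvs Z \<Longrightarrow> \<sigma> x = \<tau> x) \<Longrightarrow> ssubst \<sigma> Z = ssubst \<tau> Z"
proof (induction Z arbitrary: \<sigma> \<tau> rule: stype_induct')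
  case (Choice p bs)
  have "ssubst \<sigma> U = ssubst \<tau> U" if lu: "(l, U) \<in> set bs" for l U
    using Choice(1)[OF lu, of \<sigma> \<tau>] Choice(2) fvs_choice[OF lu] by blast
  then show ?case by (auto split: prod.splits)
next
  case (Mu a k T)
  have "ssubst (\<sigma>(a := TVar a)) T = ssubst (\<tau>(a := TVar a)) T"
    by (rule Mu(1)) (use Mu(2) in auto)
  then show ?case by simp
next
  case (SSeq T U)
  have "ssubst \<sigma> T = ssubst \<tau> T" by (rule SSeq(1)) (use SSeq(3) in auto)
  moreover have "ssubst \<sigma> U = ssubst \<tau> U" by (rule SSeq(2)) (use SSeq(3) in auto)
  ultimately show ?case by simp
next
  case (TVar x) then show ?case by simp
qed simp_all

lemma ssubst_id: "ssubst TVar Z = Z"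
proof (induction Z rule: stype_induct')
  case (Choice p bs)
  then show ?case by (auto split: prod.splits intro!: map_idI)
qed auto

lemma ssubst_triv: "(\<And>x. x \<in> fvs Z \<Longrightarrow> \<sigma> x = TVar x) \<Longrightarrow> ssubst \<sigma> Z = Z"
  using ssubst_cong[of Z \<sigma> TVar] ssubst_id by metis

lemma fvs_ssubst: "fvs (ssubst \<sigma> Z) \<subseteq> (\<Union>x\<in>fvs Z. fvs (\<sigma> x))"
proof (induction Z arbitrary: \<sigma> rule: stype_induct')
  case (Choice p bs)
  have "fvs (ssubst \<sigma> U) \<subseteq> (\<Union>x\<in>fvs (Choice p bs). fvs (\<sigma> x))" if lu: "(l, U) \<in> set bs" for l U
    using Choice(1)[OF lu, of \<sigma>] fvs_choice[OF lu] by blast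
  then show ?case by (force split: prod.splits)
next
  case (Mu a k T)
  have "fvs (ssubst (\<sigma>(a := TVar a)) T) \<subseteq> (\<Union>x\<in>fvs T. fvs ((\<sigma>(a := TVar a)) x))" by (rule Mu(1))
  then show ?case by (auto split: if_splits)
next
  case (SSeq T U)
  have "fvs (ssubst \<sigma> T) \<subseteq> (\<Union>x\<in>fvs T. fvs (\<sigma> x))" by (rule SSeq(1))
  moreover have "fvs (ssubst \<sigma> U) \<subseteq> (\<Union>x\<in>fvs U. fvs (\<sigma> x))" by (rule SSeq(2))
  ultimately show ?case by auto
qed auto

lemma ssubst_comp:
  "(\<forall>b \<in> set (bvs Z). \<forall>x. x \<noteq> b \<longrightarrow> b \<notin> fvs (\<sigma> x)) \<Longrightarrow>
   ssubst \<tau> (ssubst \<sigma> Z) = ssubst (\<lambda>x. ssubst \<tau> (\<sigma> x)) Z"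
proof (induction Z arbitrary: \<sigma> \<tau> rule: stype_induct')
  case (Choice p bs)
  have "ssubst \<tau> (ssubst \<sigma> U) = ssubst (\<lambda>x. ssubst \<tau> (\<sigma> x)) U" if lu: "(l, U) \<in> set bs" for l U
    by (rule Choice(1)[OF lu]) (use Choice(2) bvs_choice[OF lu] in blast)
  then show ?case by (auto split: prod.splits)
next
  case (SSeq T U)
  have "ssubst \<tau> (ssubst \<sigma> T) = ssubst (\<lambda>x. ssubst \<tau> (\<sigma> x)) T" by (rule SSeq(1)) (use SSeq(3) in auto)
  moreover have "ssubst \<tau> (ssubst \<sigma> U) = ssubst (\<lambda>x. ssubst \<tau> (\<sigma> x)) U" by (rule SSeq(2)) (use SSeq(3) in auto)
  ultimately show ?case by simp
next
  case (Mu a k T)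
  have h: "\<forall>b \<in> set (bvs T). \<forall>x. x \<noteq> b \<longrightarrow> b \<notin> fvs ((\<sigma>(a := TVar a)) x)"
    using Mu(2) by auto
  have "ssubst (\<tau>(a := TVar a)) (ssubst (\<sigma>(a := TVar a)) T)
       = ssubst (\<lambda>x. ssubst (\<tau>(a := TVar a)) ((\<sigma>(a := TVar a)) x)) T"
    by (rule Mu(1)[OF h])
  also have "(\<lambda>x. ssubst (\<tau>(a := TVar a)) ((\<sigma>(a := TVar a)) x)) = (\<lambda>x. ssubst \<tau> (\<sigma> x))(a := TVar a)"
  proof
    fix x show "ssubst (\<tau>(a := TVar a)) ((\<sigma>(a := TVar a)) x) = ((\<lambda>x. ssubst \<tau> (\<sigma> x))(a := TVar a)) x"
    proof (cases "x = a")
      case False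
      have "a \<notin> fvs (\<sigma> x)" using Mu(2) False by auto
      then have "ssubst (\<tau>(a := TVar a)) (\<sigma> x) = ssubst \<tau> (\<sigma> x)"
        by (intro ssubst_cong) auto
      then show ?thesis using False by simp
    qed simp
  qed
  finally have eq: "ssubst (\<tau>(a := TVar a)) (ssubst (\<sigma>(a := TVar a)) T) = ssubst ((\<lambda>x. ssubst \<tau> (\<sigma> x))(a := TVar a)) T" .
  show ?case by (simp only: ssubst.simps eq)
qed auto

lemma tr_ssubst: "(\<And>x. x \<in> fvs Z \<Longrightarrow> tr S (\<sigma> x) = tr S (TVar x)) \<Longrightarrow> tr S (ssubst \<sigma> Z) = tr S Z"
proof (induction Z rule: stype_induct')
  case (Choice p bs)
  have "tr S (ssubst \<sigma> U) = tr S U" if lu: "(l, U) \<in> set bs" for l U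
    by (rule Choice(1)[OF lu]) (use Choice(2) fvs_choice[OF lu] in blast)
  then show ?case by (auto split: prod.splits)
next
  case (SSeq T U)
  have "tr S (ssubst \<sigma> T) = tr S T" by (rule SSeq(1)) (use SSeq(3) in auto)
  moreover have "tr S (ssubst \<sigma> U) = tr S U" by (rule SSeq(2)) (use SSeq(3) in auto)
  ultimately show ?case by simp
next
  case (TVar x) then show ?case by (simp del: tr.simps(5))
qed auto

lemma unr_indep: "unr \<sigma> Z = unr \<tau> Z"
proof (induction \<sigma> Z arbitrary: \<tau> rule: unr.induct)
  case (1 \<sigma> T U)
  have a: "unr \<sigma> T = unr \<tau> T" by (rule 1(1))
  show ?case
  proof (cases "unr \<sigma> T = Skip")
    case True
    have "unr \<sigma> U = unr \<tau> U" by (rule 1(2)[OF True])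
    then show ?thesis using a True by simp
  next
    case False then show ?thesis using a by simp
  qed
next
  case (2 \<sigma> a k T)
  have "unr (\<lambda>x. ssubst \<sigma> ((TVar(a := Mu a k T)) x)) T = unr (\<lambda>x. ssubst \<tau> ((TVar(a := Mu a k T)) x)) T"
    by (rule 2)
  then show ?case by simp
qed auto

lemma terminated_ssubst: "terminated Z \<Longrightarrow> terminated (ssubst \<sigma> Z)"
proof (induction Z arbitrary: \<sigma> rule: stype_induct')
  case (SSeq T U)
  then show ?case using SSeq(1)[of \<sigma>] SSeq(2)[of \<sigma>] by simp
next
  case (Mu a k T)
  then show ?case using Mu(1)[of "\<sigma>(a := TVar a)"] by simp
qed auto

lemma tr_Eps: "tr S Z = Eps \<Longrightarrow> terminated Z"
proof (induction Z rule: stype_induct')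
  case (SSeq T U)
  then show ?case by (auto simp: odot_def split: if_splits)
next
  case (TVar x) then show ?case by (simp split: if_splits)
qed auto

lemma unr_Skip: "unr \<sigma> Z = Skip \<Longrightarrow> terminated Z"
proof (induction \<sigma> Z rule: unr.induct)
  case (1 \<sigma> T U)
  then show ?case by (cases "unr \<sigma> T = Skip") auto
qed auto

lemma tr_unr_Eps: "tr S (unr \<sigma> Z) = Eps \<Longrightarrow> unr \<sigma> Z = Skip"
proof (induction \<sigma> Z rule: unr.induct)
  case (1 \<sigma> T U)
  then show ?case by (cases "unr \<sigma> T = Skip") (auto simp: odot_def split: if_splits)
qed (auto split: if_splits)


lemma bvs_mu: "set (bvs Y) = fst ` mu_subterms Y"
proof (induction Y rule: stype_induct')
  case (Choice p bs)
  then show ?case by force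
qed auto

lemma mu_sub_trans: "(d,k,X) \<in> mu_subterms Y \<Longrightarrow> mu_subterms X \<subseteq> mu_subterms Y"
proof (induction Y rule: stype_induct')
  case (Choice p bs)
  then show ?case by force
qed auto

lemma distinct_concat_map_disj:
  "distinct (concat (map f xs)) \<Longrightarrow> x \<in> set xs \<Longrightarrow> y \<in> set xs \<Longrightarrow> x \<noteq> y \<Longrightarrow> set (f x) \<inter> set (f y) = {}"
  by (induction xs) auto

lemma distinct_concat_map_elem:
  "distinct (concat (map f xs)) \<Longrightarrow> x \<in> set xs \<Longrightarrow> distinct (f x)"
  by (induction xs) auto

lemma mu_notin_bvs: "distinct (bvs Y) \<Longrightarrow> (d,k,X) \<in> mu_subterms Y \<Longrightarrow> d \<notin> set (bvs X)"
proof (induction Y rule: stype_induct')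
  case (Choice p bs)
  obtain l U where lu: "(l,U) \<in> set bs" "(d,k,X) \<in> mu_subterms U" using Choice(3) by force
  have "distinct (bvs U)" using distinct_concat_map_elem[of "\<lambda>lU. bvs (snd lU)" bs "(l,U)"] Choice(2) lu by simp
  then show ?case using Choice(1)[OF lu(1)] lu(2) by blast
next
  case (SSeq T U)
  have "distinct (bvs T)" "distinct (bvs U)" "set (bvs T) \<inter> set (bvs U) = {}" using SSeq(3) by auto
  then show ?case using SSeq(1,2) SSeq(4) mu_sub_trans[of d k X T] mu_sub_trans[of d k X U] by (auto simp: bvs_mu)
next
  case (Mu a k' T)
  have "distinct (bvs T)" "a \<notin> set (bvs T)" using Mu(2) by auto
  then show ?case using Mu(1) Mu(3) by (auto simp: bvs_mu)
qed auto

lemma mu_unique: "distinct (bvs Y) \<Longrightarrow> (d,k,X) \<in> mu_subterms Y \<Longrightarrow> (d,k',X') \<in> mu_subterms Y \<Longrightarrow> k = k' \<and> X = X'"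
proof (induction Y rule: stype_induct')
  case (Choice p bs)
  obtain l U where lu: "(l,U) \<in> set bs" "(d,k,X) \<in> mu_subterms U" using Choice(3) by force
  obtain l' U' where lu': "(l',U') \<in> set bs" "(d,k',X') \<in> mu_subterms U'" using Choice(4) by force
  have dU: "distinct (bvs U)" using distinct_concat_map_elem[of "\<lambda>lU. bvs (snd lU)" bs "(l,U)"] Choice(2) lu by simp
  show ?case
  proof (cases "(l,U) = (l',U')")
    case True
    then show ?thesis using Choice(1)[OF lu(1) dU lu(2)] lu' by simp
  next
    case False
    have "set (bvs U) \<inter> set (bvs U') = {}"
      using distinct_concat_map_disj[of "\<lambda>lU. bvs (snd lU)" bs "(l,U)" "(l',U')"] Choice(2) lu lu' False by simp
    moreover have "d \<in> set (bvs U)" "d \<in> set (bvs U')" using lu(2) lu'(2) by (force simp: bvs_mu)+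
    ultimately show ?thesis by blast
  qed
next
  case (SSeq T U)
  have "distinct (bvs T)" "distinct (bvs U)" "set (bvs T) \<inter> set (bvs U) = {}" using SSeq(3) by auto
  moreover have "(d,k,X) \<in> mu_subterms T \<or> (d,k,X) \<in> mu_subterms U" using SSeq(4) by simp
  moreover have "(d,k',X') \<in> mu_subterms T \<or> (d,k',X') \<in> mu_subterms U" using SSeq(5) by simp
  ultimately show ?case using SSeq(1,2)
    by (metis disjoint_iff fst_conv image_eqI bvs_mu)
next
  case (Mu a k'' T)
  have "distinct (bvs T)" "a \<notin> set (bvs T)" using Mu(2) by auto
  moreover have "(d,k,X) = (a,k'',T) \<or> (d,k,X) \<in> mu_subterms T" using Mu(3) by simp
  moreover have "(d,k',X') = (a,k'',T) \<or> (d,k',X') \<in> mu_subterms T" using Mu(4) by simp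
  ultimately show ?case using Mu(1)
    by (metis fst_conv image_eqI bvs_mu prod.inject)
qed auto

inductive bpa_stepn :: "('v \<times> ('b, 'l, 'v) bpa) set \<Rightarrow> nat \<Rightarrow> ('b, 'l, 'v) bpa \<Rightarrow> ('b, 'l, 'v) act \<Rightarrow> ('b, 'l, 'v) bpa \<Rightarrow> bool"
  for E where
  n_act: "bpa_stepn E (Suc n) (PAct \<alpha>) \<alpha> Eps"
| n_sum: "p \<in> set ps \<Longrightarrow> bpa_stepn E n p \<alpha> p' \<Longrightarrow> bpa_stepn E (Suc n) (PSum ps) \<alpha> p'"
| n_seq1: "bpa_stepn E n p \<alpha> p' \<Longrightarrow> p' \<noteq> Eps \<Longrightarrow> bpa_stepn E (Suc n) (PSeq p q) \<alpha> (PSeq p' q)"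
| n_seq2: "bpa_stepn E n p \<alpha> Eps \<Longrightarrow> bpa_stepn E (Suc n) (PSeq p q) \<alpha> q"
| n_var: "(X, p) \<in> E \<Longrightarrow> bpa_stepn E n p \<alpha> p' \<Longrightarrow> bpa_stepn E (Suc n) (PVar X) \<alpha> p'"

lemma stepn_Suc: "bpa_stepn E n q \<alpha> p \<Longrightarrow> bpa_stepn E (Suc n) q \<alpha> p"
  by (induction rule: bpa_stepn.induct) (auto intro: bpa_stepn.intros)

lemma stepn_mono: "bpa_stepn E n q \<alpha> p \<Longrightarrow> n \<le> m \<Longrightarrow> bpa_stepn E m q \<alpha> p"
  by (induction m) (auto simp: le_Suc_eq intro: stepn_Suc)

lemma step_stepn: "bpa_step E q \<alpha> p \<Longrightarrow> \<exists>n. bpa_stepn E n q \<alpha> p"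
  by (induction rule: bpa_step.induct) (auto intro: bpa_stepn.intros)

inductive_cases stepn_Eps: "bpa_stepn E n Eps \<alpha> p"
inductive_cases stepn_Act: "bpa_stepn E n (PAct a) \<alpha> p"
inductive_cases stepn_Sum: "bpa_stepn E n (PSum ps) \<alpha> p"
inductive_cases stepn_Seq: "bpa_stepn E n (PSeq q r) \<alpha> p"
inductive_cases stepn_Var: "bpa_stepn E n (PVar X) \<alpha> p"

lemma odot_Eps[simp]: "odot a Eps = a" "odot Eps a = a" by (auto simp: odot_def)
lemma odot_ne: "a \<noteq> Eps \<Longrightarrow> b \<noteq> Eps \<Longrightarrow> odot a b = PSeq a b" by (auto simp: odot_def)

lemma seq_case:
  assumes step: "bpa_stepn E n (odot a b) \<alpha> p" and ne: "a \<noteq> Eps"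
    and IH: "\<And>p. bpa_stepn E n a \<alpha> p \<Longrightarrow> \<exists>W. p = tr S W \<and> st_step Z1 \<alpha> W"
    and trZ2: "tr S Z2 = b"
  shows "\<exists>W'. p = tr S W' \<and> st_step (SSeq Z1 Z2) \<alpha> W'"
proof (cases "b = Eps")
  case True
  then obtain W where "p = tr S W" "st_step Z1 \<alpha> W" using step IH by auto
  then show ?thesis using True trZ2 by (intro exI[of _ "SSeq W Z2"]) (auto intro: st_seq1)
next
  case False
  then have "bpa_stepn E n (PSeq a b) \<alpha> p" using step ne by (simp add: odot_ne)
  then consider (s1) m p' where "n = Suc m" "p = PSeq p' b" "bpa_stepn E m a \<alpha> p'" "p' \<noteq> Eps"
    | (s2) m where "n = Suc m" "p = b" "bpa_stepn E m a \<alpha> Eps"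
    by (elim stepn_Seq) auto
  then show ?thesis
  proof cases
    case (s1 m p')
    then obtain W where W: "p' = tr S W" "st_step Z1 \<alpha> W" using IH stepn_Suc by blast
    then show ?thesis using s1 False trZ2 by (intro exI[of _ "SSeq W Z2"]) (auto intro: st_seq1 simp: odot_ne)
  next
    case (s2 m)
    then obtain W where W: "Eps = tr S W" "st_step Z1 \<alpha> W" using IH stepn_Suc by blast
    then show ?thesis using s2 trZ2 by (intro exI[of _ "SSeq W Z2"]) (auto intro: st_seq1)
  qed
qed


definition good :: "('b,'l,'v) stype \<Rightarrow> nat \<Rightarrow> ('b,'l,'v) stype \<Rightarrow> bool" where
  "good T0 n W \<longleftrightarrow> (\<forall>\<alpha> p. bpa_stepn (eqs T0) n (tr (set (bvs T0)) W) \<alpha> p \<longrightarrow>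
      (\<exists>W'. p = tr (set (bvs T0)) W' \<and> st_step W \<alpha> W'))"

definition oks :: "('b,'l,'v) stype \<Rightarrow> nat \<Rightarrow> ('v \<Rightarrow> ('b,'l,'v) stype) \<Rightarrow> bool" where
  "oks T0 n \<sigma> \<longleftrightarrow> (\<forall>x. \<sigma> x = TVar x \<or> (x \<in> set (bvs T0) \<and> tr (set (bvs T0)) (\<sigma> x) = PVar x
      \<and> good T0 n (\<sigma> x) \<and> fvs (\<sigma> x) \<inter> set (bvs T0) = {}))"

lemma good_mono: "good T0 (Suc n) W \<Longrightarrow> good T0 n W"
  unfolding good_def using stepn_Suc by blast

lemma oks_mono: "oks T0 (Suc n) \<sigma> \<Longrightarrow> oks T0 n \<sigma>"
  unfolding oks_def using good_mono by blast

lemma oks_fvs: "oks T0 n \<sigma> \<Longrightarrow> \<forall>x. \<sigma> x = TVar x \<or> fvs (\<sigma> x) \<inter> set (bvs T0) = {}"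
  unfolding oks_def by blast

lemma tr_ssubst_oks: "oks T0 n \<sigma> \<Longrightarrow> tr (set (bvs T0)) (ssubst \<sigma> Z) = tr (set (bvs T0)) Z"
  apply (rule tr_ssubst)
  unfolding oks_def by (metis tr.simps(5))

lemma eqs_lookup: "(d, r) \<in> eqs T0 \<Longrightarrow> distinct (bvs T0) \<Longrightarrow> (d,k,X) \<in> mu_subterms T0
   \<Longrightarrow> r = tr (set (bvs T0)) (unr TVar X)"
  unfolding eqs_def using mu_unique by fastforce

lemma mu_in_S: "(d,k,X) \<in> mu_subterms T0 \<Longrightarrow> d \<in> set (bvs T0)"
  by (force simp: bvs_mu)

lemma bvs_sub: "mu_subterms Y \<subseteq> mu_subterms T0 \<Longrightarrow> set (bvs Y) \<subseteq> set (bvs T0)"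
  by (auto simp: bvs_mu)

lemma mu_step:
  assumes dX: "d \<notin> set (bvs X)" and bX: "set (bvs X) \<subseteq> S" and dS: "d \<in> S"
    and sig: "\<forall>x. \<sigma> x = TVar x \<or> fvs (\<sigma> x) \<inter> S = {}"
    and st: "st_step (ssubst (\<sigma>(d := Mu d k (ssubst (\<sigma>(d:=TVar d)) X))) X) \<alpha> W"
  shows "st_step (Mu d k (ssubst (\<sigma>(d:=TVar d)) X)) \<alpha> W"
proof -
  define M where "M = Mu d k (ssubst (\<sigma>(d:=TVar d)) X)"
  have c: "\<forall>b \<in> set (bvs X). \<forall>x. x \<noteq> b \<longrightarrow> b \<notin> fvs ((\<sigma>(d:=TVar d)) x)"
  proof (intro ballI allI impI)
    fix b x assume b: "b \<in> set (bvs X)" and xb: "x \<noteq> b"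
    show "b \<notin> fvs ((\<sigma>(d:=TVar d)) x)"
    proof (cases "x = d")
      case True then show ?thesis using b dX by auto
    next
      case False
      then show ?thesis using sig[rule_format, of x] b bX xb by auto
    qed
  qed
  have "subst1 M d (ssubst (\<sigma>(d:=TVar d)) X) = ssubst (\<lambda>x. ssubst (TVar(d:=M)) ((\<sigma>(d:=TVar d)) x)) X"
    unfolding subst1_def by (rule ssubst_comp[OF c])
  also have "(\<lambda>x. ssubst (TVar(d:=M)) ((\<sigma>(d:=TVar d)) x)) = \<sigma>(d := M)"
  proof
    fix x show "ssubst (TVar(d:=M)) ((\<sigma>(d:=TVar d)) x) = (\<sigma>(d := M)) x"
    proof (cases "x = d")
      case False
      have "ssubst (TVar(d:=M)) (\<sigma> x) = \<sigma> x"
      proof (rule ssubst_triv)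
        fix y assume "y \<in> fvs (\<sigma> x)"
        then have "y \<noteq> d" using sig[rule_format, of x] dS False by auto
        then show "(TVar(d:=M)) y = TVar y" by simp
      qed
      then show ?thesis using False by simp
    qed simp
  qed
  finally have "subst1 M d (ssubst (\<sigma>(d:=TVar d)) X) = ssubst (\<sigma>(d := M)) X" .
  then show ?thesis using st unfolding M_def by (auto intro: st_mu)
qed

lemma fvs_M:
  assumes sig: "\<forall>x. \<sigma> x = TVar x \<or> fvs (\<sigma> x) \<inter> S = {}"
    and h: "\<forall>x\<in>fvs (Mu d k X). x \<in> S \<longrightarrow> \<sigma> x \<noteq> TVar x"
  shows "fvs (Mu d k (ssubst (\<sigma>(d:=TVar d)) X)) \<inter> S = {}"
proof (rule ccontr)
  assume "fvs (Mu d k (ssubst (\<sigma>(d:=TVar d)) X)) \<inter> S \<noteq> {}"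
  then obtain y where y: "y \<in> fvs (ssubst (\<sigma>(d:=TVar d)) X)" "y \<noteq> d" "y \<in> S" by auto
  have "y \<in> (\<Union>x\<in>fvs X. fvs ((\<sigma>(d:=TVar d)) x))" using subsetD[OF fvs_ssubst y(1)] .
  then obtain x where x: "x \<in> fvs X" "y \<in> fvs ((\<sigma>(d:=TVar d)) x)" by (rule UN_E)
  show False
  proof (cases "x = d")
    case True then show ?thesis using x(2) y(2) by simp
  next
    case False
    then have xf: "x \<in> fvs (Mu d k X)" using x(1) by simp
    have yx: "y \<in> fvs (\<sigma> x)" using x(2) False by simp
    show ?thesis
    proof (cases "\<sigma> x = TVar x")
      case True
      then have "y = x" using yx by simp
      then show ?thesis using True h xf y(3) by blast
    next
      case nt: False
      then have "fvs (\<sigma> x) \<inter> S = {}" using sig by blast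
      then show ?thesis using yx y(3) by blast
    qed
  qed
qed

lemma oks_upd:
  assumes "oks T0 n \<sigma>" "(d,k,X) \<in> mu_subterms T0"
    "\<forall>x\<in>fvs (Mu d k X). x \<in> set (bvs T0) \<longrightarrow> \<sigma> x \<noteq> TVar x"
    "good T0 n (Mu d k (ssubst (\<sigma>(d:=TVar d)) X))"
  shows "oks T0 n (\<sigma>(d := Mu d k (ssubst (\<sigma>(d:=TVar d)) X)))"
  using assms fvs_M[OF oks_fvs[OF assms(1)] assms(3)] mu_in_S[OF assms(2)]
  unfolding oks_def by auto

lemma choice_elem: "bpa_stepn E m (odot (PAct c) q) \<alpha> p \<Longrightarrow> \<alpha> = c \<and> p = q"
  by (auto simp: odot_def elim!: stepn_Act stepn_Seq split: if_splits)

lemma choice_case: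
  assumes "bpa_stepn E n (tr S (Choice q bs)) \<alpha> p"
  shows "\<exists>l U. (l,U) \<in> set bs \<and> \<alpha> = AChoice q l \<and> p = tr S U"
proof -
  from assms obtain m r where "r \<in> set (map (\<lambda>(l, U). odot (PAct (AChoice q l)) (tr S U)) bs)"
    "bpa_stepn E m r \<alpha> p" by (auto elim!: stepn_Sum)
  then obtain l U where "(l,U) \<in> set bs" "bpa_stepn E m (odot (PAct (AChoice q l)) (tr S U)) \<alpha> p"
    by auto
  then show ?thesis using choice_elem by blast
qed


lemma unr_Mu_TVar: "unr TVar (Mu d k X) = unr TVar X"
  unfolding unr.simps(2) by (rule unr_indep)

lemma L:
  fixes T0 :: "('b,'l,'v) stype"
  assumes dist: "distinct (bvs T0)"
    and Q: "\<And>\<sigma> d k X. (d,k,X) \<in> mu_subterms T0 \<Longrightarrow> oks T0 n \<sigma> \<Longrightarrow>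
       (\<forall>x\<in>fvs (Mu d k X). x \<in> set (bvs T0) \<longrightarrow> \<sigma> x \<noteq> TVar x) \<Longrightarrow>
       good T0 n (Mu d k (ssubst (\<sigma>(d:=TVar d)) X))"
  shows "mu_subterms Y \<subseteq> mu_subterms T0 \<Longrightarrow> oks T0 n \<sigma> \<Longrightarrow>
    (\<forall>x\<in>fvs Y. x \<in> set (bvs T0) \<longrightarrow> \<sigma> x \<noteq> TVar x) \<Longrightarrow>
    bpa_stepn (eqs T0) n (tr (set (bvs T0)) (unr TVar Y)) \<alpha> p \<Longrightarrow>
    \<exists>W'. p = tr (set (bvs T0)) W' \<and> st_step (ssubst \<sigma> Y) \<alpha> W'"
proof (induction Y arbitrary: \<sigma> p rule: stype_induct')
  case Skip
  then show ?case by (auto elim: stepn_Eps)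
next
  case (Msg q B)
  then have "\<alpha> = AMsg q B" "p = Eps" by (auto elim: stepn_Act)
  then show ?case by (intro exI[of _ Skip]) (auto intro: st_msg)
next
  case (Choice q bs)
  then obtain l U where lU: "(l,U) \<in> set bs" "\<alpha> = AChoice q l" "p = tr (set (bvs T0)) U"
    using choice_case[of "eqs T0" n "set (bvs T0)" q bs \<alpha> p] by auto
  have "(l, ssubst \<sigma> U) \<in> set (map (\<lambda>(l, U). (l, ssubst \<sigma> U)) bs)" using lU(1) by force
  then have "st_step (Choice q (map (\<lambda>(l, U). (l, ssubst \<sigma> U)) bs)) (AChoice q l) (ssubst \<sigma> U)"
    by (rule st_choice)
  then have "st_step (ssubst \<sigma> (Choice q bs)) \<alpha> (ssubst \<sigma> U)" using lU(2) by simp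
  moreover have "p = tr (set (bvs T0)) (ssubst \<sigma> U)" using lU(3) tr_ssubst_oks[OF Choice(3)] by simp
  ultimately show ?case by blast
next
  case (SSeq Y1 Y2)
  let ?S = "set (bvs T0)"
  have ms: "mu_subterms Y1 \<subseteq> mu_subterms T0" "mu_subterms Y2 \<subseteq> mu_subterms T0" using SSeq(3) by auto
  have fv: "\<forall>x\<in>fvs Y1. x \<in> ?S \<longrightarrow> \<sigma> x \<noteq> TVar x" "\<forall>x\<in>fvs Y2. x \<in> ?S \<longrightarrow> \<sigma> x \<noteq> TVar x"
    using SSeq(5) by auto
  show ?case
  proof (cases "unr TVar Y1 = Skip")
    case True
    then have st: "bpa_stepn (eqs T0) n (tr ?S (unr TVar Y2)) \<alpha> p" using SSeq(6) by simp
    obtain W where W: "p = tr ?S W" "st_step (ssubst \<sigma> Y2) \<alpha> W"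
      using SSeq(2)[OF ms(2) SSeq(4) fv(2) st] by blast
    have "terminated (ssubst \<sigma> Y1)" using unr_Skip[OF True] terminated_ssubst by blast
    then show ?thesis using W by (auto intro: st_seq2)
  next
    case False
    then have st: "bpa_stepn (eqs T0) n (odot (tr ?S (unr TVar Y1)) (tr ?S Y2)) \<alpha> p" using SSeq(6) by simp
    have ne: "tr ?S (unr TVar Y1) \<noteq> Eps" using tr_unr_Eps False by blast
    have "\<exists>W'. p = tr ?S W' \<and> st_step (SSeq (ssubst \<sigma> Y1) (ssubst \<sigma> Y2)) \<alpha> W'"
      by (rule seq_case[OF st ne]) (use SSeq(1)[OF ms(1) SSeq(4) fv(1)] tr_ssubst_oks[OF SSeq(4)] in auto)
    then show ?thesis by simp
  qed
next
  case (Mu d k X)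
  let ?S = "set (bvs T0)"
  let ?M = "Mu d k (ssubst (\<sigma>(d:=TVar d)) X)"
  have dkX: "(d,k,X) \<in> mu_subterms T0" using Mu(2) by simp
  have msX: "mu_subterms X \<subseteq> mu_subterms T0" using Mu(2) by auto
  have gM: "good T0 n ?M" by (rule Q[OF dkX Mu(3) Mu(4)])
  have ok': "oks T0 n (\<sigma>(d := ?M))" by (rule oks_upd[OF Mu(3) dkX Mu(4) gM])
  have fv': "\<forall>x\<in>fvs X. x \<in> ?S \<longrightarrow> (\<sigma>(d := ?M)) x \<noteq> TVar x" using Mu(4) by auto
  have st: "bpa_stepn (eqs T0) n (tr ?S (unr TVar X)) \<alpha> p" using Mu(5) unr_Mu_TVar by metis
  obtain W where W: "p = tr ?S W" "st_step (ssubst (\<sigma>(d := ?M)) X) \<alpha> W"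
    using Mu(1)[OF msX ok' fv' st] by blast
  have "st_step ?M \<alpha> W"
    by (rule mu_step[OF mu_notin_bvs[OF dist dkX] bvs_sub[OF msX] mu_in_S[OF dkX] oks_fvs[OF Mu(3)] W(2)])
  then show ?case using W(1) by auto
next
  case (TVar x)
  let ?S = "set (bvs T0)"
  show ?case
  proof (cases "x \<in> ?S")
    case True
    then have nt: "\<sigma> x \<noteq> TVar x" using TVar(3) by simp
    then have "tr ?S (\<sigma> x) = PVar x" "good T0 n (\<sigma> x)" using TVar(2) unfolding oks_def by blast+
    moreover have "bpa_stepn (eqs T0) n (PVar x) \<alpha> p" using TVar(4) True by simp
    ultimately show ?thesis unfolding good_def by auto
  next
    case False
    then have "\<sigma> x = TVar x" using TVar(2) unfolding oks_def by blast
    moreover have "\<alpha> = AVar x" "p = Eps" using TVar(4) False by (auto elim: stepn_Act)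
    ultimately show ?thesis by (intro exI[of _ Skip]) (auto intro: st_var)
  qed
qed

lemma L2:
  fixes T0 :: "('b,'l,'v) stype"
  assumes dist: "distinct (bvs T0)"
    and Q: "\<And>\<sigma> d k X. (d,k,X) \<in> mu_subterms T0 \<Longrightarrow> oks T0 n \<sigma> \<Longrightarrow>
       (\<forall>x\<in>fvs (Mu d k X). x \<in> set (bvs T0) \<longrightarrow> \<sigma> x \<noteq> TVar x) \<Longrightarrow>
       good T0 n (Mu d k (ssubst (\<sigma>(d:=TVar d)) X))"
  shows "mu_subterms Y \<subseteq> mu_subterms T0 \<Longrightarrow> oks T0 n \<sigma> \<Longrightarrow>
    (\<forall>x\<in>fvs Y. x \<in> set (bvs T0) \<longrightarrow> \<sigma> x \<noteq> TVar x) \<Longrightarrow>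
    bpa_stepn (eqs T0) n (tr (set (bvs T0)) Y) \<alpha> p \<Longrightarrow>
    \<exists>W'. p = tr (set (bvs T0)) W' \<and> st_step (ssubst \<sigma> Y) \<alpha> W'"
proof (induction Y arbitrary: \<sigma> p rule: stype_induct')
  case (SSeq Y1 Y2)
  let ?S = "set (bvs T0)"
  have ms: "mu_subterms Y1 \<subseteq> mu_subterms T0" "mu_subterms Y2 \<subseteq> mu_subterms T0" using SSeq(3) by auto
  have fv: "\<forall>x\<in>fvs Y1. x \<in> ?S \<longrightarrow> \<sigma> x \<noteq> TVar x" "\<forall>x\<in>fvs Y2. x \<in> ?S \<longrightarrow> \<sigma> x \<noteq> TVar x"
    using SSeq(5) by auto
  show ?case
  proof (cases "tr ?S Y1 = Eps")
    case True
    then have st: "bpa_stepn (eqs T0) n (tr ?S Y2) \<alpha> p" using SSeq(6) by simp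
    obtain W where W: "p = tr ?S W" "st_step (ssubst \<sigma> Y2) \<alpha> W"
      using SSeq(2)[OF ms(2) SSeq(4) fv(2) st] by blast
    have "terminated (ssubst \<sigma> Y1)" using tr_Eps[OF True] terminated_ssubst by blast
    then show ?thesis using W by (auto intro: st_seq2)
  next
    case False
    then have st: "bpa_stepn (eqs T0) n (odot (tr ?S Y1) (tr ?S Y2)) \<alpha> p" using SSeq(6) by simp
    have "\<exists>W'. p = tr ?S W' \<and> st_step (SSeq (ssubst \<sigma> Y1) (ssubst \<sigma> Y2)) \<alpha> W'"
      by (rule seq_case[OF st False]) (use SSeq(1)[OF ms(1) SSeq(4) fv(1)] tr_ssubst_oks[OF SSeq(4)] in auto)
    then show ?thesis by simp
  qed
next
  case (Mu d k X)
  have dkX: "(d,k,X) \<in> mu_subterms T0" using Mu(2) by simp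
  have gM: "good T0 n (Mu d k (ssubst (\<sigma>(d:=TVar d)) X))" by (rule Q[OF dkX Mu(3) Mu(4)])
  then show ?case using Mu(5) unfolding good_def by simp
next
  case Skip
  show ?case by (rule L[OF dist Q, of Skip \<sigma> \<alpha> p]) (use Skip in simp_all)
next
  case (Msg q B)
  show ?case by (rule L[OF dist Q, of "Msg q B" \<sigma> \<alpha> p]) (use Msg in simp_all)
next
  case (Choice q bs)
  show ?case by (rule L[OF dist Q, of "Choice q bs" \<sigma> \<alpha> p]) (use Choice in simp_all)
next
  case (TVar x)
  show ?case by (rule L[OF dist Q, of "TVar x" \<sigma> \<alpha> p]) (use TVar in simp_all)
qed

lemma Q:
  fixes T0 :: "('b,'l,'v) stype"
  assumes dist: "distinct (bvs T0)"
  shows "(d,k,X) \<in> mu_subterms T0 \<Longrightarrow> oks T0 n \<sigma> \<Longrightarrow>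
       (\<forall>x\<in>fvs (Mu d k X). x \<in> set (bvs T0) \<longrightarrow> \<sigma> x \<noteq> TVar x) \<Longrightarrow>
       good T0 n (Mu d k (ssubst (\<sigma>(d:=TVar d)) X))"
proof (induction n arbitrary: \<sigma> d k X)
  case 0
  then show ?case unfolding good_def by (auto elim: stepn_Var)
next
  case (Suc n)
  let ?S = "set (bvs T0)"
  let ?M = "Mu d k (ssubst (\<sigma>(d:=TVar d)) X)"
  have ok: "oks T0 n \<sigma>" using oks_mono[OF Suc(3)] .
  have gM: "good T0 n ?M" by (rule Suc.IH[OF Suc(2) ok Suc(4)])
  have ok': "oks T0 n (\<sigma>(d := ?M))" by (rule oks_upd[OF ok Suc(2) Suc(4) gM])
  have msX: "mu_subterms X \<subseteq> mu_subterms T0" using mu_sub_trans[OF Suc(2)] by simp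
  have fv': "\<forall>x\<in>fvs X. x \<in> ?S \<longrightarrow> (\<sigma>(d := ?M)) x \<noteq> TVar x" using Suc(4) by auto
  have QIH: "\<And>\<sigma> d k X. (d,k,X) \<in> mu_subterms T0 \<Longrightarrow> oks T0 n \<sigma> \<Longrightarrow>
       (\<forall>x\<in>fvs (Mu d k X). x \<in> set (bvs T0) \<longrightarrow> \<sigma> x \<noteq> TVar x) \<Longrightarrow>
       good T0 n (Mu d k (ssubst (\<sigma>(d:=TVar d)) X))" by (rule Suc.IH)
  show ?case unfolding good_def
  proof (intro allI impI)
    fix \<alpha> p assume "bpa_stepn (eqs T0) (Suc n) (tr ?S ?M) \<alpha> p"
    then obtain r where r: "(d, r) \<in> eqs T0" "bpa_stepn (eqs T0) n r \<alpha> p" by (auto elim: stepn_Var)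
    have "r = tr ?S (unr TVar X)" by (rule eqs_lookup[OF r(1) dist Suc(2)])
    then have st: "bpa_stepn (eqs T0) n (tr ?S (unr TVar X)) \<alpha> p" using r(2) by simp
    obtain W where W: "p = tr ?S W" "st_step (ssubst (\<sigma>(d := ?M)) X) \<alpha> W"
      using L[OF dist QIH msX ok' fv' st] by blast
    have "st_step ?M \<alpha> W"
      by (rule mu_step[OF mu_notin_bvs[OF dist Suc(2)] bvs_sub[OF msX] mu_in_S[OF Suc(2)] oks_fvs[OF ok] W(2)])
    then show "\<exists>W'. p = tr ?S W' \<and> st_step ?M \<alpha> W'" using W(1) by blast
  qed
qed

theorem mainTheorem5:
  fixes T :: "('b, 'l, 'v) stype" and \<Delta> :: "'v \<Rightarrow> mult option"
    and \<alpha> :: "('b, 'l, 'v) act" and p :: "('b, 'l, 'v) bpa"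
  assumes "kinding \<Delta> T m"
    and "mu_occurs T"
    and "bv_distinct T"
    and "bpa_step (eqs T) (tr (set (bvs T)) T) \<alpha> p"
  shows "\<exists>T'. p = tr (set (bvs T)) T' \<and> st_step T \<alpha> T'"
proof -
  have dist: "distinct (bvs T)" and disj: "set (bvs T) \<inter> fvs T = {}"
    using assms(3) unfolding bv_distinct_def by auto
  obtain n where st: "bpa_stepn (eqs T) n (tr (set (bvs T)) T) \<alpha> p" using step_stepn[OF assms(4)] by blast
  have ok: "oks T n TVar" unfolding oks_def by simp
  have fv: "\<forall>x\<in>fvs T. x \<in> set (bvs T) \<longrightarrow> TVar x \<noteq> TVar x" using disj by blast
  have "\<exists>W'. p = tr (set (bvs T)) W' \<and> st_step (ssubst TVar T) \<alpha> W'"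
    by (rule L2[OF dist Q[OF dist] subset_refl ok fv st])
  then show ?thesis by (simp add: ssubst_id)
qed

end
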